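(* For every integer $n\ge0$: (1) $\displaystyle\sum_{k=0}^n(-1)^{n-k}\binom nk(y+1)^{n-k}\mathrm B_{k+1}(x,y)=\mathrm{Fe}_n(x)$; (2) $\displaystyle\sum_{k=0}^n(-1)^{n-k}\binom nk(y+1)^{n-k}\mathrm C_{k+1}(x,y)$ equals $x^{n/2}\mathcal C_{n/2}$ if $n$ is even and $0$ if $n$ is odd, where $\mathcal C_m=\frac1{m+1}\binom{2m}m$.
   Context: A set partition of $[n]=\{1,\dots,n\}$ is a set of nonempty pairwise disjoint sets (blocks) with union $[n]$. A pair $(i,j)$ is an arc of $\Lambda$ if $i<j$ lie in the same block and $j$ is the least element of that block greater than $i$; $\mathrm{Arc}(\Lambda)$ is the set of arcs and $\mathrm{Cov}(\Lambda)=\{(i,j)\in\mathrm{Arc}(\Lambda):j=i+1\}$. $\Lambda$ is noncrossing if there are no arcs $(i,k),(j,l)$ with $i<j<k<l$, and feasible if every block has at least two elements. $\Pi(n)$, $\mathrm{NC}(n)$ are the sets of partitions and noncrossing partitions of $[n]$. $\mathrm B_n(x,y)=\sum_{\Lambda\in\Pi(n)}x^{|\mathrm{Arc}(\Lambda)\setminus\mathrm{Cov}(\Lambda)|}y^{|\mathrm{Cov}(\Lambda)|}$, $\mathrm C_n(x,y)$ is the same sum over $\mathrm{NC}(n)$, and $\mathrm{Fe}_n(x)=\sum_{\text{feasible }\Lambda\in\Pi(n)}x^{|\mathrm{Arc}(\Lambda)|}$ (with the empty partition of $[0]$ counted, so $\mathrm{Fe}_0=1$). *)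

theory Defs
  imports Complex_Main "HOL-Library.Disjoint_Sets"
begin

definition set_partitions :: "nat \<Rightarrow> nat set set set" where
  "set_partitions n = {P. partition_on {1..n} P}"

definition arcs :: "nat set set \<Rightarrow> (nat \<times> nat) set" where
  "arcs P = {(i, j). \<exists>B\<in>P. i \<in> B \<and> j \<in> B \<and> i < j \<and> (\<forall>k\<in>B. i < k \<longrightarrow> j \<le> k)}"

definition cov :: "nat set set \<Rightarrow> (nat \<times> nat) set" where
  "cov P = {(i, j) \<in> arcs P. j = i + 1}"

definition noncrossing :: "nat set set \<Rightarrow> bool" where
  "noncrossing P \<longleftrightarrow> \<not> (\<exists>i j k l. (i, k) \<in> arcs P \<and> (j, l) \<in> arcs P \<and> i < j \<and> j < k \<and> k < l)"

definition feasible :: "nat set set \<Rightarrow> bool" where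
  "feasible P \<longleftrightarrow> (\<forall>B\<in>P. card B \<ge> 2)"

definition nc_partitions :: "nat \<Rightarrow> nat set set set" where
  "nc_partitions n = {P \<in> set_partitions n. noncrossing P}"

definition Bpoly :: "nat \<Rightarrow> real \<Rightarrow> real \<Rightarrow> real" where
  "Bpoly n x y = (\<Sum>P\<in>set_partitions n. x ^ card (arcs P - cov P) * y ^ card (cov P))"

definition Cpoly :: "nat \<Rightarrow> real \<Rightarrow> real \<Rightarrow> real" where
  "Cpoly n x y = (\<Sum>P\<in>nc_partitions n. x ^ card (arcs P - cov P) * y ^ card (cov P))"

definition Fe :: "nat \<Rightarrow> real \<Rightarrow> real" where
  "Fe n x = (\<Sum>P\<in>{P \<in> set_partitions n. feasible P}. x ^ card (arcs P))"

definition catalan :: "nat \<Rightarrow> real" where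
  "catalan m = (1 / (real m + 1)) * real ((2 * m) choose m)"

end

theory Submission
  imports Defs
begin


lemma pascal_sum:
  fixes a :: real and w :: "nat \<Rightarrow> real"
  shows "(\<Sum>k\<le>n. real (n choose k) * a ^ (n - k) * w (Suc k)) + (\<Sum>k\<le>n. real (n choose k) * a ^ (Suc n - k) * w k)
       = (\<Sum>k\<le>Suc n. real (Suc n choose k) * a ^ (Suc n - k) * w k)"
proof -
  have R: "(\<Sum>k\<le>Suc n. real (Suc n choose k) * a ^ (Suc n - k) * w k)
      = a ^ Suc n * w 0 + (\<Sum>k\<le>n. real (n choose k) * a ^ (n - k) * w (Suc k))
        + (\<Sum>k\<le>n. real (n choose Suc k) * a ^ (n - k) * w (Suc k))"
  proof -
    have "(\<Sum>k\<le>Suc n. real (Suc n choose k) * a ^ (Suc n - k) * w k)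
       = real (Suc n choose 0) * a ^ (Suc n - 0) * w 0 + (\<Sum>k\<le>n. real (Suc n choose Suc k) * a ^ (Suc n - Suc k) * w (Suc k))"
      by (rule sum.atMost_Suc_shift)
    also have "\<dots> = a ^ Suc n * w 0 + (\<Sum>k\<le>n. real (n choose k) * a ^ (n - k) * w (Suc k) + real (n choose Suc k) * a ^ (n - k) * w (Suc k))"
      by (simp only: binomial_Suc_Suc diff_Suc_Suc of_nat_add distrib_right) simp
    finally show ?thesis by (simp only: sum.distrib add.assoc)
  qed
  have "(\<Sum>k\<le>n. real (n choose k) * a ^ (Suc n - k) * w k) = (\<Sum>k\<le>Suc n. real (n choose k) * a ^ (Suc n - k) * w k)"
    by simp
  also have "\<dots> = a ^ Suc n * w 0 + (\<Sum>k\<le>n. real (n choose Suc k) * a ^ (n - k) * w (Suc k))"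
    by (subst sum.atMost_Suc_shift) simp
  finally show ?thesis using R by simp
qed

lemma binom_level:
  fixes u v :: "nat \<Rightarrow> nat \<Rightarrow> real" and \<alpha> \<beta> :: "nat \<Rightarrow> real" and a :: real
  assumes v0: "\<And>h. v 0 h = u 0 h"
    and us: "\<And>k h. u (Suc k) h = (if h = 0 then 0 else u k (h - 1)) + \<alpha> h * u k h + \<beta> h * u k (Suc h)"
    and vs: "\<And>n h. v (Suc n) h = (if h = 0 then 0 else v n (h - 1)) + \<alpha> h * v n h + \<beta> h * v n (Suc h) + a * v n h"
  shows "v n h = (\<Sum>k\<le>n. real (n choose k) * a ^ (n - k) * u k h)"
proof (induction n arbitrary: h)
  case 0
  then show ?case using v0 by simp
next
  case (Suc n)
  let ?c = "\<lambda>k. real (n choose k) * a ^ (n - k)"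
  have e1: "(if h = 0 then 0 else v n (h - 1)) = (\<Sum>k\<le>n. ?c k * (if h = 0 then 0 else u k (h - 1)))"
    using Suc.IH[of "h - 1"] by (simp add: mult.assoc)
  have "v (Suc n) h = (\<Sum>k\<le>n. ?c k * (if h = 0 then 0 else u k (h - 1))) + \<alpha> h * (\<Sum>k\<le>n. ?c k * u k h)
      + \<beta> h * (\<Sum>k\<le>n. ?c k * u k (Suc h)) + a * (\<Sum>k\<le>n. ?c k * u k h)"
    unfolding vs e1 Suc.IH by (simp add: mult.assoc)
  also have "\<dots> = (\<Sum>k\<le>n. ?c k * u (Suc k) h) + (\<Sum>k\<le>n. real (n choose k) * a ^ (Suc n - k) * u k h)"
  proof -
    have "(\<Sum>k\<le>n. real (n choose k) * a ^ (Suc n - k) * u k h) = a * (\<Sum>k\<le>n. ?c k * u k h)"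
      unfolding sum_distrib_left
      by (rule sum.cong[OF refl]) (simp add: Suc_diff_le algebra_simps)
    moreover have "(\<Sum>k\<le>n. ?c k * u (Suc k) h) = (\<Sum>k\<le>n. ?c k * (if h = 0 then 0 else u k (h - 1))) + \<alpha> h * (\<Sum>k\<le>n. ?c k * u k h)
      + \<beta> h * (\<Sum>k\<le>n. ?c k * u k (Suc h))"
      unfolding us by (simp add: sum.distrib sum_distrib_left algebra_simps)
    ultimately show ?thesis by simp
  qed
  also have "\<dots> = (\<Sum>k\<le>Suc n. real (Suc n choose k) * a ^ (Suc n - k) * u k h)"
    using pascal_sum[of n a "\<lambda>k. u k h"] by (simp add: mult.assoc)
  finally show ?case .
qed

lemma alt_binom: "(\<Sum>i\<le>m. real (m choose i) * (-1) ^ (m - i)) = (if m = 0 then 1 else 0)"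
proof -
  have "(\<Sum>i\<le>m. real (m choose i) * (-1) ^ (m - i)) = (1 + (-1::real)) ^ m"
    using binomial_ring[of "1::real" "-1" m] by simp
  then show ?thesis by simp
qed

lemma binom_inv:
  fixes a :: real and f b :: "nat \<Rightarrow> real"
  assumes b: "\<And>k. b k = (\<Sum>j\<le>k. real (k choose j) * a ^ (k - j) * f j)"
  shows "(\<Sum>k\<le>n. (-1) ^ (n - k) * real (n choose k) * a ^ (n - k) * b k) = f n"
proof -
  define g where "g j i = real (n choose j) * a ^ (n - j) * f j * ((-1) ^ (n - j - i) * real (n - j choose i))" for j i
  have "(\<Sum>k\<le>n. (-1) ^ (n - k) * real (n choose k) * a ^ (n - k) * b k)
      = (\<Sum>k\<le>n. \<Sum>j\<le>k. g j (k - j))"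
  proof (rule sum.cong[OF refl])
    fix k assume k: "k \<in> {..n}"
    show "(-1) ^ (n - k) * real (n choose k) * a ^ (n - k) * b k = (\<Sum>j\<le>k. g j (k - j))"
      unfolding b sum_distrib_left
    proof (rule sum.cong[OF refl])
      fix j assume j: "j \<in> {..k}"
      have cm: "real (n choose k) * real (k choose j) = real (n choose j) * real (n - j choose (k - j))"
        using choose_mult[of j k n] j k by (metis atMost_iff of_nat_mult)
      have e: "(n - k) + (k - j) = n - j" using j k by simp
      have pw: "a ^ (n - k) * a ^ (k - j) = a ^ (n - j)"
        unfolding power_add[symmetric] e ..

      have nk: "n - k = n - j - (k - j)" using j k by simp
      show "(-1) ^ (n - k) * real (n choose k) * a ^ (n - k) * (real (k choose j) * a ^ (k - j) * f j) = g j (k - j)"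
      proof -
        have "(-1) ^ (n - k) * real (n choose k) * a ^ (n - k) * (real (k choose j) * a ^ (k - j) * f j)
            = (-1) ^ (n - k) * (real (n choose k) * real (k choose j)) * (a ^ (n - k) * a ^ (k - j)) * f j"
          by (simp add: algebra_simps)
        also have "\<dots> = (-1) ^ (n - k) * (real (n choose j) * real (n - j choose (k - j))) * a ^ (n - j) * f j"
          unfolding cm pw ..
        also have "\<dots> = g j (k - j)" unfolding g_def nk[symmetric] by (simp add: algebra_simps)

        finally show ?thesis .
      qed
    qed
  qed
  also have "\<dots> = (\<Sum>(j, i)\<in>{(j, i). j + i \<le> n}. g j i)"
    by (rule sum.triangle_reindex_eq[symmetric])
  also have "{(j, i). j + i \<le> n} = (SIGMA j:{..n}. {..n - j})" by auto
  also have "(\<Sum>(j, i)\<in>(SIGMA j:{..n}. {..n - j}). g j i) = (\<Sum>j\<le>n. \<Sum>i\<le>n - j. g j i)"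
    by (rule sum.Sigma[symmetric]) auto
  also have "\<dots> = (\<Sum>j\<le>n. if j = n then f n else 0)"
  proof (rule sum.cong[OF refl])
    fix j assume j: "j \<in> {..n}"
    have "(\<Sum>i\<le>n - j. g j i) = real (n choose j) * a ^ (n - j) * f j * (\<Sum>i\<le>n - j. real (n - j choose i) * (-1) ^ (n - j - i))"
      unfolding g_def sum_distrib_left by (simp add: algebra_simps)
    also have "\<dots> = (if j = n then f n else 0)" unfolding alt_binom using j by auto
    finally show "(\<Sum>i\<le>n - j. g j i) = (if j = n then f n else 0)" .
  qed
  also have "\<dots> = f n" by simp
  finally show ?thesis .
qed


fun QE :: "real \<Rightarrow> nat \<Rightarrow> nat \<Rightarrow> real" where
  "QE x 0 h = (if h = 0 then 1 else 0)"
| "QE x (Suc k) h = (if h = 0 then 0 else QE x k (h - 1)) + x * QE x k (Suc h)"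

definition bal :: "nat \<Rightarrow> nat \<Rightarrow> real" where
  "bal k r = real (k choose r) - (if r = 0 then 0 else real (k choose (r - 1)))"

definition EC :: "real \<Rightarrow> nat \<Rightarrow> nat \<Rightarrow> real" where
  "EC x k h = (if h \<le> k \<and> even (k + h) then x ^ ((k - h) div 2) * bal k ((k - h) div 2) else 0)"

lemma bal0[simp]: "bal k 0 = 1"
  by (simp add: bal_def)

lemma bal_pascal: "bal (Suc k) (Suc r) = bal k (Suc r) + bal k r"
  by (cases r) (simp_all add: bal_def)

lemma bal_sym: "bal (Suc (2 * r)) (Suc r) = 0"
proof -
  have "Suc (2 * r) choose Suc r = Suc (2 * r) choose (Suc (2 * r) - Suc r)"
    by (rule binomial_symmetric) simp
  also have "Suc (2 * r) - Suc r = r" by simp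
  finally show ?thesis by (simp add: bal_def)
qed

lemma QE_closed: "QE x k h = EC x k h"
proof (induction k arbitrary: h)
  case 0
  show ?case by (simp add: EC_def)
next
  case (Suc k)
  have step: "QE x (Suc k) h = (if h = 0 then 0 else EC x k (h - 1)) + x * EC x k (Suc h)"
    by (simp add: Suc.IH)
  show ?case
  proof (cases "h \<le> Suc k \<and> even (Suc k + h)")
    case False
    then show ?thesis unfolding step EC_def by auto
  next
    case True
    then obtain r where r: "Suc k = h + 2 * r"
      by (metis add_diff_inverse_nat evenE even_add not_le odd_add)
    show ?thesis
    proof (cases h)
      case 0
      then obtain r' where r': "r = Suc r'" using r by (cases r) auto
      have k: "k = Suc (2 * r')" using r r' 0 by simp
      have "EC x k (Suc 0) = x ^ r' * bal k r'" unfolding EC_def k by simp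
      moreover have "EC x (Suc k) 0 = x ^ Suc r' * bal (Suc k) (Suc r')" unfolding EC_def using r r' 0 by simp
      moreover have "bal (Suc k) (Suc r') = bal k r'"
      proof -
        have "bal k (Suc r') = 0" unfolding k by (rule bal_sym)
        then show ?thesis using bal_pascal[of k r'] by simp
      qed

      ultimately show ?thesis unfolding step using 0 by simp
    next
      case (Suc h')
      show ?thesis
      proof (cases r)
        case 0
        then have hk: "h = Suc k" using r by simp
        have "EC x k (h - 1) = 1" using hk by (simp add: EC_def)
        moreover have "EC x k (Suc h) = 0" using hk by (simp add: EC_def)
        moreover have "EC x (Suc k) h = 1" using hk by (simp add: EC_def)
        ultimately show ?thesis unfolding step using Suc by simp
      next
        case (Suc r')
        have k: "k = h + Suc (2 * r')" using r Suc by simp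
        have "EC x k (h - 1) = x ^ Suc r' * bal k (Suc r')"
          unfolding EC_def using k \<open>h = Suc h'\<close> by simp
        moreover have "EC x k (Suc h) = x ^ r' * bal k r'"
          unfolding EC_def using k by simp
        moreover have "EC x (Suc k) h = x ^ Suc r' * bal (Suc k) (Suc r')"
          unfolding EC_def using r Suc by simp
        ultimately show ?thesis unfolding step bal_pascal using \<open>h = Suc h'\<close> by (simp add: algebra_simps)
      qed
    qed
  qed
qed

lemma bal_cat: "bal (2 * m) m = real ((2 * m) choose m) / (real m + 1)"
proof (cases m)
  case 0
  then show ?thesis by simp
next
  case (Suc m')
  have a: "m * ((2 * m) choose m) = (2 * m) * ((2 * m - 1) choose (m - 1))"
    using times_binomial_minus1_eq[of m "2 * m"] Suc by simp
  have b: "(2 * m - (m - 1)) * ((2 * m) choose (m - 1)) = (2 * m) * ((2 * m - 1) choose (m - 1))"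
    by (rule binomial_absorb_comp)
  have c: "2 * m - (m - 1) = m + 1" using Suc by simp
  have "real m * real ((2 * m) choose m) = (real m + 1) * real ((2 * m) choose (m - 1))"
    using a b c by (metis of_nat_Suc of_nat_mult Suc_eq_plus1 add.commute)
  then have "real ((2 * m) choose (m - 1)) = real m * real ((2 * m) choose m) / (real m + 1)"
    by (simp add: field_simps)
  then show ?thesis unfolding bal_def using Suc by (simp add: field_simps)
qed



definition ab :: "nat set \<Rightarrow> (nat \<times> nat) set" where
  "ab B = {(i, j). i \<in> B \<and> j \<in> B \<and> i < j \<and> (\<forall>k\<in>B. i < k \<longrightarrow> j \<le> k)}"

lemma arcs_UN: "arcs P = (\<Union>B\<in>P. ab B)"
  by (auto simp: arcs_def ab_def)

lemma arcs_insert: "arcs (insert B P) = ab B \<union> arcs P"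
  by (simp add: arcs_UN)

lemma arcs_empty[simp]: "arcs {} = {}"
  by (simp add: arcs_UN)

lemma ab_singleton[simp]: "ab {m} = {}"
  by (auto simp: ab_def)

lemma ab_insert_max:
  assumes "finite B" "B \<noteq> {}" "\<forall>b\<in>B. b < m"
  shows "ab (insert m B) = insert (Max B, m) (ab B)"
proof (rule set_eqI, clarify)
  fix i j
  have MB: "Max B \<in> B" "\<forall>b\<in>B. b \<le> Max B" using assms by auto
  show "(i, j) \<in> ab (insert m B) \<longleftrightarrow> (i, j) \<in> insert (Max B, m) (ab B)"
  proof
    assume h: "(i, j) \<in> ab (insert m B)"
    show "(i, j) \<in> insert (Max B, m) (ab B)"
    proof (cases "j = m")
      case True
      with h assms have iB: "i \<in> B" by (auto simp: ab_def)
      have "i = Max B"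
      proof (rule ccontr)
        assume "i \<noteq> Max B"
        then have "i < Max B" using MB iB by fastforce
        with h MB True assms show False by (fastforce simp: ab_def)
      qed
      with True show ?thesis by simp
    next
      case False
      with h assms show ?thesis by (auto simp: ab_def)
    qed
  next
    assume h: "(i, j) \<in> insert (Max B, m) (ab B)"
    then show "(i, j) \<in> ab (insert m B)"
    proof
      assume "(i, j) = (Max B, m)"
      then show ?thesis using MB assms by (auto simp: ab_def)
    next
      assume "(i, j) \<in> ab B"
      then show ?thesis using assms by (auto simp: ab_def)
    qed
  qed
qed


abbreviation SP :: "nat \<Rightarrow> nat set set set" where "SP n \<equiv> set_partitions n"

lemma finite_Pi: "finite (SP n)"
  unfolding set_partitions_def by (rule finitely_many_partition_on) simp

lemma Pi_props:
  assumes "P \<in> SP n"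
  shows "finite P" "\<And>B. B \<in> P \<Longrightarrow> finite B" "\<And>B. B \<in> P \<Longrightarrow> B \<noteq> {}"
    "\<And>B. B \<in> P \<Longrightarrow> B \<subseteq> {1..n}" "\<Union>P = {1..n}"
    "\<And>B C. B \<in> P \<Longrightarrow> C \<in> P \<Longrightarrow> B \<noteq> C \<Longrightarrow> B \<inter> C = {}"
proof -
  have p: "partition_on {1..n} P" using assms by (simp add: set_partitions_def)
  show "finite P" using finite_elements[OF _ p] by simp
  show "\<Union>P = {1..n}" using partition_onD1[OF p] by simp
  then show "\<And>B. B \<in> P \<Longrightarrow> B \<subseteq> {1..n}" by auto
  then show "\<And>B. B \<in> P \<Longrightarrow> finite B" using finite_subset by blast
  show "\<And>B. B \<in> P \<Longrightarrow> B \<noteq> {}" using partition_onD3[OF p] by auto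
  show "\<And>B C. B \<in> P \<Longrightarrow> C \<in> P \<Longrightarrow> B \<noteq> C \<Longrightarrow> B \<inter> C = {}"
    using partition_onD2[OF p] by (auto simp: pairwise_def disjnt_def)
qed

lemma Pi_I:
  assumes "\<Union>P = {1..n}" "\<And>B C. B \<in> P \<Longrightarrow> C \<in> P \<Longrightarrow> B \<noteq> C \<Longrightarrow> B \<inter> C = {}" "{} \<notin> P"
  shows "P \<in> SP n"
  unfolding set_partitions_def
proof (rule CollectI, rule partition_onI)
  fix p q assume "p \<in> P" "q \<in> P" "p \<noteq> q"
  then show "disjnt p q" using assms(2) by (simp add: disjnt_def)
qed (use assms in auto)

definition join :: "nat \<Rightarrow> nat set set \<Rightarrow> nat set \<Rightarrow> nat set set" where
  "join m P B = insert (insert m B) (P - {B})"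

definition restr :: "nat \<Rightarrow> nat set set \<Rightarrow> nat set set" where
  "restr m Q = (\<lambda>B. B - {m}) ` Q - {{}}"

lemma Pi0: "SP 0 = {{}}"
  by (auto simp: set_partitions_def partition_on_empty)

lemma ins_Pi: "P \<in> SP n \<Longrightarrow> insert {Suc n} P \<in> SP (Suc n)"
proof -
  assume P: "P \<in> SP n"
  note pp = Pi_props[OF P]
  show ?thesis
  proof (rule Pi_I)
    show "\<Union> (insert {Suc n} P) = {1..Suc n}" using pp(5) by (auto simp: atLeastAtMostSuc_conv)
    show "{} \<notin> insert {Suc n} P" using pp(3) by auto
    fix B C assume h: "B \<in> insert {Suc n} P" "C \<in> insert {Suc n} P" "B \<noteq> C"
    have nB: "Suc n \<notin> D" if "D \<in> P" for D using pp(4)[OF that] by auto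
    show "B \<inter> C = {}"
    proof (cases "B = {Suc n}")
      case True
      then have "C \<in> P" using h by auto
      then show ?thesis using True nB by blast
    next
      case False
      then have B: "B \<in> P" using h by auto
      show ?thesis
      proof (cases "C = {Suc n}")
        case True
        then show ?thesis using B nB by blast
      next
        case False
        then have "C \<in> P" using h by auto
        then show ?thesis using pp(6) B h(3) by blast
      qed
    qed
  qed
qed

lemma join_Pi: "P \<in> SP n \<Longrightarrow> B \<in> P \<Longrightarrow> join (Suc n) P B \<in> SP (Suc n)"
proof -
  assume P: "P \<in> SP n" and B: "B \<in> P"
  note pp = Pi_props[OF P]
  show ?thesis unfolding join_def
  proof (rule Pi_I)
    have "\<Union> (insert (insert (Suc n) B) (P - {B})) = insert (Suc n) (\<Union>P)" using B by blast
    then show "\<Union> (insert (insert (Suc n) B) (P - {B})) = {1..Suc n}" using pp(5) by (simp add: atLeastAtMostSuc_conv)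
    show "{} \<notin> insert (insert (Suc n) B) (P - {B})" using pp(3) by auto
    fix C D assume h: "C \<in> insert (insert (Suc n) B) (P - {B})" "D \<in> insert (insert (Suc n) B) (P - {B})" "C \<noteq> D"
    have nB: "Suc n \<notin> E" if "E \<in> P" for E using pp(4)[OF that] by auto
    have dB: "E \<inter> insert (Suc n) B = {}" if "E \<in> P - {B}" for E
      using pp(6)[OF _ B, of E] nB[of E] that by blast
    show "C \<inter> D = {}"
    proof (cases "C = insert (Suc n) B")
      case True
      then have "D \<in> P - {B}" using h by auto
      then show ?thesis using True dB by blast
    next
      case False
      then have C: "C \<in> P - {B}" using h by auto
      show ?thesis
      proof (cases "D = insert (Suc n) B")
        case True
        then show ?thesis using C dB by blast
      next
        case False
        then have "D \<in> P - {B}" using h by auto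
        then show ?thesis using pp(6) C h(3) by blast
      qed
    qed
  qed
qed

lemma Pi_notin: "P \<in> SP n \<Longrightarrow> B \<in> P \<Longrightarrow> Suc n \<notin> B"
  using Pi_props(4) by fastforce

lemma Pi_Diff_Suc: "P \<in> SP n \<Longrightarrow> B \<in> P \<Longrightarrow> B - {Suc n} = B"
  using Pi_notin by (simp add: Diff_insert0)

lemma restr_ins: "P \<in> SP n \<Longrightarrow> restr (Suc n) (insert {Suc n} P) = P"
proof -
  assume P: "P \<in> SP n"
  note pp = Pi_props[OF P]
  have e: "(\<lambda>B. B - {Suc n}) ` P = P"
  proof -
    have "(\<lambda>B. B - {Suc n}) ` P = id ` P"
      by (rule image_cong[OF refl]) (use Pi_Diff_Suc P in auto)
    then show ?thesis by simp
  qed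
  have r: "(\<lambda>B. B - {Suc n}) ` insert {Suc n} P = insert {} P" unfolding image_insert e by simp
  have "{} \<notin> P" using pp(3) by blast
  then show ?thesis unfolding restr_def r by (rule Diff_insert_absorb)
qed

lemma restr_join: "P \<in> SP n \<Longrightarrow> B \<in> P \<Longrightarrow> restr (Suc n) (join (Suc n) P B) = P"
proof -
  assume P: "P \<in> SP n" and B: "B \<in> P"
  note pp = Pi_props[OF P]
  have e: "(\<lambda>B. B - {Suc n}) ` (P - {B}) = P - {B}"
  proof -
    have "(\<lambda>B. B - {Suc n}) ` (P - {B}) = id ` (P - {B})"
      by (rule image_cong[OF refl]) (use Pi_Diff_Suc P in auto)
    then show ?thesis by simp
  qed
  have "insert (Suc n) B - {Suc n} = B" using Pi_notin[OF P B] by simp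
  then have "(\<lambda>B. B - {Suc n}) ` join (Suc n) P B = insert B (P - {B})"
    unfolding join_def image_insert e by simp
  also have "\<dots> = P" using B by (rule insert_Diff)
  finally have r: "(\<lambda>B. B - {Suc n}) ` join (Suc n) P B = P" .
  have "{} \<notin> P" using pp(3) by blast
  then show ?thesis unfolding restr_def r by simp
qed

lemma Pi_Suc_cover: "Q \<in> SP (Suc n) \<Longrightarrow> \<exists>P\<in>SP n. Q = insert {Suc n} P \<or> (\<exists>B\<in>P. Q = join (Suc n) P B)"
proof -
  assume Q: "Q \<in> SP (Suc n)"
  note qq = Pi_props[OF Q]
  have "Suc n \<in> \<Union>Q" using qq(5) by simp
  then obtain C where C: "C \<in> Q" "Suc n \<in> C" by blast
  have other: "Suc n \<notin> D" if "D \<in> Q" "D \<noteq> C" for D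
    using qq(6)[OF that(1) C(1)] that C by blast
  have sub: "D \<subseteq> {1..n}" if "D \<in> Q" "D \<noteq> C" for D
  proof
    fix a assume "a \<in> D"
    then have "a \<in> {1..Suc n}" "a \<noteq> Suc n" using qq(4)[OF that(1)] other[OF that] by auto
    then show "a \<in> {1..n}" by auto
  qed
  have Csub: "C - {Suc n} \<subseteq> {1..n}"
  proof
    fix a assume "a \<in> C - {Suc n}"
    then have "a \<in> {1..Suc n}" "a \<noteq> Suc n" using qq(4)[OF C(1)] by auto
    then show "a \<in> {1..n}" by auto
  qed
  have cov: "\<exists>D\<in>Q. a \<in> D" if "a \<in> {1..n}" for a
  proof -
    have "a \<in> \<Union>Q" using qq(5) that by simp
    then show ?thesis by blast
  qed
  show ?thesis
  proof (cases "C = {Suc n}")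
    case True
    define P where "P = Q - {C}"
    have "P \<in> SP n"
    proof (rule Pi_I)
      show "\<Union> P = {1..n}"
      proof
        show "\<Union> P \<subseteq> {1..n}" using sub unfolding P_def by blast
        show "{1..n} \<subseteq> \<Union> P"
        proof
          fix a assume a: "a \<in> {1..n}"
          then obtain D where D: "D \<in> Q" "a \<in> D" using cov by blast
          have "D \<noteq> C" using True D a by auto
          then show "a \<in> \<Union>P" using D unfolding P_def by blast
        qed
      qed
      show "D \<inter> E = {}" if "D \<in> P" "E \<in> P" "D \<noteq> E" for D E
        using qq(6) that unfolding P_def by blast
      show "{} \<notin> P" using qq(3) unfolding P_def by blast
    qed
    moreover have "Q = insert {Suc n} P" using True C(1) unfolding P_def by (simp add: insert_absorb)
    ultimately show ?thesis by (intro bexI[of _ P]) simp_all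
  next
    case False
    define B where "B = C - {Suc n}"
    have Bne: "B \<noteq> {}" using False C unfolding B_def by blast
    have BnQ: "B \<notin> Q - {C}"
    proof
      assume "B \<in> Q - {C}"
      then have "B \<inter> C = {}" using qq(6) C by blast
      then show False using Bne unfolding B_def by blast
    qed
    define P where "P = insert B (Q - {C})"
    have "P \<in> SP n"
    proof (rule Pi_I)
      show "\<Union> P = {1..n}"
      proof
        show "\<Union> P \<subseteq> {1..n}" using sub Csub unfolding P_def B_def by blast
        show "{1..n} \<subseteq> \<Union> P"
        proof
          fix a assume a: "a \<in> {1..n}"
          then obtain D where D: "D \<in> Q" "a \<in> D" using cov by blast
          show "a \<in> \<Union>P"
          proof (cases "D = C")
            case True
            then have "a \<in> B" using D a unfolding B_def by auto
            then show ?thesis unfolding P_def by blast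
          next
            case False
            then show ?thesis using D unfolding P_def by blast
          qed
        qed
      qed
      show "D \<inter> E = {}" if "D \<in> P" "E \<in> P" "D \<noteq> E" for D E
      proof (cases "D = B")
        case True
        then have "E \<in> Q" "E \<noteq> C" using that unfolding P_def by auto
        then have "E \<inter> C = {}" using qq(6) C(1) by blast
        then show ?thesis using True unfolding B_def by blast
      next
        case F1: False
        show ?thesis
        proof (cases "E = B")
          case True
          then have "D \<in> Q" "D \<noteq> C" using that F1 unfolding P_def by auto
          then have "D \<inter> C = {}" using qq(6) C(1) by blast
          then show ?thesis using True unfolding B_def by blast
        next
          case False
          then have "D \<in> Q" "E \<in> Q" using that F1 unfolding P_def by auto
          then show ?thesis using qq(6) that(3) by blast
        qed
      qed
      show "{} \<notin> P" using qq(3) Bne unfolding P_def by blast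
    qed
    moreover have "B \<in> P" unfolding P_def by simp
    moreover have "Q = join (Suc n) P B"
    proof -
      have 1: "P - {B} = Q - {C}" using BnQ unfolding P_def by auto
      have 2: "insert (Suc n) B = C" using C unfolding B_def by auto
      have "join (Suc n) P B = insert C (Q - {C})" unfolding join_def 1 2 ..
      then show ?thesis using C(1) by (simp add: insert_absorb)
    qed
    ultimately show ?thesis by (intro bexI[of _ P]) auto
  qed
qed

lemma join_has: "Suc n \<in> \<Union> (join (Suc n) P B)" by (simp add: join_def)

lemma join_inj:
  assumes P: "P \<in> SP n" and B: "B \<in> P" and B': "B' \<in> P" and eq: "join (Suc n) P B = join (Suc n) P B'"
  shows "B = B'"
proof -
  note pp = Pi_props[OF P]
  have nB: "Suc n \<notin> C" if "C \<in> P" for C using Pi_notin[OF P that] .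
  have h0: "insert (Suc n) B \<in> join (Suc n) P B" unfolding join_def by simp
  have "insert (Suc n) B \<in> join (Suc n) P B'" using h0 unfolding eq .
  then have "insert (Suc n) B = insert (Suc n) B' \<or> insert (Suc n) B \<in> P" unfolding join_def by blast
  moreover have "insert (Suc n) B \<notin> P" using nB by blast
  ultimately have "insert (Suc n) B = insert (Suc n) B'" by blast
  then show ?thesis using nB B B' by (metis insert_ident)
qed

lemma ins_ne_join:
  assumes P: "P \<in> SP n" and B: "B \<in> P"
  shows "insert {Suc n} P \<noteq> join (Suc n) P B"
proof
  note pp = Pi_props[OF P]
  have nB: "Suc n \<notin> C" if "C \<in> P" for C using Pi_notin[OF P that] .
  assume eq: "insert {Suc n} P = join (Suc n) P B"
  have "{Suc n} \<in> join (Suc n) P B" using eq by blast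
  then have "{Suc n} = insert (Suc n) B \<or> {Suc n} \<in> P" unfolding join_def by blast
  moreover have "{Suc n} \<notin> P" using nB by blast
  ultimately have "{Suc n} = insert (Suc n) B" by blast
  then show False using pp(3)[OF B] nB[OF B] by blast
qed

lemma sum_Pi_Suc:
  "(\<Sum>Q\<in>SP (Suc n). f Q) = (\<Sum>P\<in>SP n. f (insert {Suc n} P) + (\<Sum>B\<in>P. f (join (Suc n) P B)))"
proof -
  define fib where "fib P = insert (insert {Suc n} P) (join (Suc n) P ` P)" for P
  have U: "SP (Suc n) = (\<Union>P\<in>SP n. fib P)"
  proof
    show "SP (Suc n) \<subseteq> (\<Union>P\<in>SP n. fib P)"
    proof
      fix Q assume "Q \<in> SP (Suc n)"
      from Pi_Suc_cover[OF this] obtain P where P: "P \<in> SP n" "Q = insert {Suc n} P \<or> (\<exists>B\<in>P. Q = join (Suc n) P B)"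
        by blast
      then have "Q \<in> fib P" unfolding fib_def by blast
      then show "Q \<in> (\<Union>P\<in>SP n. fib P)" using P(1) by blast
    qed
    show "(\<Union>P\<in>SP n. fib P) \<subseteq> SP (Suc n)"
    proof
      fix Q assume "Q \<in> (\<Union>P\<in>SP n. fib P)"
      then obtain P where P: "P \<in> SP n" "Q \<in> fib P" by blast
      then have "Q = insert {Suc n} P \<or> (\<exists>B\<in>P. Q = join (Suc n) P B)" unfolding fib_def by blast
      then show "Q \<in> SP (Suc n)" using ins_Pi[OF P(1)] join_Pi[OF P(1)] by blast
    qed
  qed
  have fin: "finite (fib P)" if "P \<in> SP n" for P
    using Pi_props(1)[OF that] unfolding fib_def by simp
  have rfib: "restr (Suc n) Q = P" if "P \<in> SP n" "Q \<in> fib P" for P Q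
  proof -
    have "Q = insert {Suc n} P \<or> (\<exists>B\<in>P. Q = join (Suc n) P B)" using that(2) unfolding fib_def by blast
    then show ?thesis using restr_ins[OF that(1)] restr_join[OF that(1)] by blast
  qed
  have disj: "fib P \<inter> fib P' = {}" if "P \<in> SP n" "P' \<in> SP n" "P \<noteq> P'" for P P'
  proof -
    have "Q \<notin> fib P'" if "Q \<in> fib P" for Q
      using rfib[OF \<open>P \<in> SP n\<close> that] rfib[OF \<open>P' \<in> SP n\<close>] \<open>P \<noteq> P'\<close> by blast
    then show ?thesis by blast
  qed
  have "(\<Sum>Q\<in>SP (Suc n). f Q) = (\<Sum>P\<in>SP n. \<Sum>Q\<in>fib P. f Q)"
    unfolding U
  proof (rule sum.UNION_disjoint[OF finite_Pi])
    show "\<forall>i\<in>SP n. finite (fib i)" using fin by blast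
    show "\<forall>i\<in>SP n. \<forall>j\<in>SP n. i \<noteq> j \<longrightarrow> fib i \<inter> fib j = {}" using disj by blast
  qed
  also have "\<dots> = (\<Sum>P\<in>SP n. f (insert {Suc n} P) + (\<Sum>B\<in>P. f (join (Suc n) P B)))"
  proof (rule sum.cong[OF refl])
    fix P assume P: "P \<in> SP n"
    have nin: "insert {Suc n} P \<notin> join (Suc n) P ` P" using ins_ne_join[OF P] by blast
    have fj: "finite (join (Suc n) P ` P)" using Pi_props(1)[OF P] by simp
    have "(\<Sum>Q\<in>fib P. f Q) = f (insert {Suc n} P) + (\<Sum>Q\<in>join (Suc n) P ` P. f Q)"
      unfolding fib_def by (rule sum.insert[OF fj nin])
    also have "(\<Sum>Q\<in>join (Suc n) P ` P. f Q) = (\<Sum>B\<in>P. f (join (Suc n) P B))"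
    proof (rule sum.reindex_cong[where l = "join (Suc n) P"])
      show "inj_on (join (Suc n) P) P" unfolding inj_on_def using join_inj[OF P] by blast
    qed auto
    finally show "(\<Sum>Q\<in>fib P. f Q) = f (insert {Suc n} P) + (\<Sum>B\<in>P. f (join (Suc n) P B))" .
  qed
  finally show ?thesis .
qed

lemma arcs_ins: "arcs (insert {m} P) = arcs P"
  by (simp add: arcs_insert)

lemma arcs_sub: "P \<in> SP n \<Longrightarrow> arcs P \<subseteq> {1..n} \<times> {1..n}"
proof
  fix a assume P: "P \<in> SP n" and a: "a \<in> arcs P"
  then obtain B where "B \<in> P" "fst a \<in> B" "snd a \<in> B" unfolding arcs_def by auto
  then have "fst a \<in> {1..n}" "snd a \<in> {1..n}" using Pi_props(4)[OF P] by blast+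
  then show "a \<in> {1..n} \<times> {1..n}" by (simp add: mem_Times_iff)
qed

lemma finite_arcs: "P \<in> SP n \<Longrightarrow> finite (arcs P)"
  using arcs_sub by (meson finite_SigmaI finite_atLeastAtMost finite_subset)

lemma Max_Pi: "P \<in> SP n \<Longrightarrow> B \<in> P \<Longrightarrow> Max B \<in> B \<and> (\<forall>b\<in>B. b \<le> Max B) \<and> Max B \<le> n"
  using Pi_props(2,3,4)[of P n B] by (auto simp: subset_iff)

lemma arcs_join:
  assumes P: "P \<in> SP n" and B: "B \<in> P"
  shows "arcs (join (Suc n) P B) = insert (Max B, Suc n) (arcs P)"
proof -
  have 1: "arcs P = ab B \<union> arcs (P - {B})" unfolding arcs_UN using B by blast

  have 2: "ab (insert (Suc n) B) = insert (Max B, Suc n) (ab B)"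
    by (rule ab_insert_max) (use Pi_props(2,3,4)[OF P B] in auto)
  show ?thesis unfolding join_def arcs_insert 1 2 by auto
qed

lemma new_arc_notin: "P \<in> SP n \<Longrightarrow> (a, Suc n) \<notin> arcs P"
proof
  assume "P \<in> SP n" "(a, Suc n) \<in> arcs P"
  then have "(a, Suc n) \<in> {1..n} \<times> {1..n}" using arcs_sub by blast
  then show False by simp
qed

definition wt :: "real \<Rightarrow> real \<Rightarrow> nat set set \<Rightarrow> real" where
  "wt x y P = x ^ card (arcs P - cov P) * y ^ card (cov P)"

lemma cov_arcs: "cov P = {a \<in> arcs P. snd a = fst a + 1}"
  by (auto simp: cov_def)

lemma wt_ins: "wt x y (insert {m} P) = wt x y P"
  by (simp add: wt_def cov_def arcs_ins)

lemma wt_join: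
  assumes P: "P \<in> SP n" and B: "B \<in> P"
  shows "wt x y (join (Suc n) P B) = wt x y P * (if Max B = n then y else x)"
proof -
  let ?a = "(Max B, Suc n)"
  have A: "arcs (join (Suc n) P B) = insert ?a (arcs P)" by (rule arcs_join[OF P B])
  have nin: "?a \<notin> arcs P" by (rule new_arc_notin[OF P])
  have fin: "finite (arcs P)" by (rule finite_arcs[OF P])
  have finc: "finite (cov P)" using fin by (simp add: cov_arcs)
  show ?thesis
  proof (cases "Max B = n")
    case True
    have c: "cov (join (Suc n) P B) = insert ?a (cov P)" unfolding cov_arcs A using True by auto
    have d: "arcs (join (Suc n) P B) - cov (join (Suc n) P B) = arcs P - cov P" unfolding c A using nin by auto
    have "?a \<notin> cov P" using nin by (auto simp: cov_def)
    then have "card (cov (join (Suc n) P B)) = Suc (card (cov P))" unfolding c using finc by simp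
    then show ?thesis unfolding wt_def d using True by simp
  next
    case False
    have c: "cov (join (Suc n) P B) = cov P" unfolding cov_arcs A using False by auto
    have d: "arcs (join (Suc n) P B) - cov (join (Suc n) P B) = insert ?a (arcs P - cov P)" unfolding c A using nin False
      by (auto simp: cov_def)
    have "?a \<notin> arcs P - cov P" using nin by auto
    then have "card (arcs (join (Suc n) P B) - cov (join (Suc n) P B)) = Suc (card (arcs P - cov P))"
      unfolding d using fin by simp
    then show ?thesis unfolding wt_def c using False by simp

  qed
qed

lemma card_ins: "P \<in> SP n \<Longrightarrow> card (insert {Suc n} P) = Suc (card P)"
proof -
  assume P: "P \<in> SP n"
  have "{Suc n} \<notin> P" using Pi_notin[OF P] by blast
  then show ?thesis using Pi_props(1)[OF P] by simp
qed

lemma card_join: "P \<in> SP n \<Longrightarrow> B \<in> P \<Longrightarrow> card (join (Suc n) P B) = card P"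
proof -
  assume P: "P \<in> SP n" and B: "B \<in> P"
  have "insert (Suc n) B \<notin> P - {B}" using Pi_notin[OF P] by blast
  moreover have "card P \<ge> 1" using Pi_props(1)[OF P] B by (metis One_nat_def Suc_leI card_gt_0_iff empty_iff)
  ultimately show ?thesis unfolding join_def using Pi_props(1)[OF P] B
    by (simp add: card_Diff_singleton)
qed

lemma card_Pi_pos: "P \<in> SP (Suc n) \<Longrightarrow> card P \<ge> 1"
proof -
  assume P: "P \<in> SP (Suc n)"
  have "P \<noteq> {}" using Pi_props(5)[OF P] by auto
  then show ?thesis using Pi_props(1)[OF P] by (simp add: Suc_le_eq card_gt_0_iff)
qed

lemma sum_last_block:
  assumes P: "P \<in> SP (Suc n)"
  shows "(\<Sum>B\<in>P. (if Max B = Suc n then y else x)) = (y - x) + real (card P) * x"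
proof -
  have eq: "Max B = Suc n \<longleftrightarrow> Suc n \<in> B" if "B \<in> P" for B
    using Max_Pi[OF P that] by (metis le_antisym)
  have "Suc n \<in> \<Union>P" using Pi_props(5)[OF P] by simp
  then obtain C where C: "C \<in> P" "Suc n \<in> C" by blast
  have one: "{B \<in> P. Suc n \<in> B} = {C}"
  proof
    show "{C} \<subseteq> {B \<in> P. Suc n \<in> B}" using C by simp
    show "{B \<in> P. Suc n \<in> B} \<subseteq> {C}"
    proof
      fix B assume "B \<in> {B \<in> P. Suc n \<in> B}"
      then have "B \<in> P" "Suc n \<in> B" by auto
      then have "B = C" using Pi_props(6)[OF P _ C(1)] C(2) by blast
      then show "B \<in> {C}" by simp
    qed
  qed

  have "(\<Sum>B\<in>P. (if Max B = Suc n then y else x)) = (\<Sum>B\<in>P. x + (if Suc n \<in> B then y - x else 0))"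
    by (rule sum.cong) (auto simp: eq)
  also have "\<dots> = real (card P) * x + (\<Sum>B\<in>P. (if Suc n \<in> B then y - x else 0))"
    by (simp add: sum.distrib)
  also have "(\<Sum>B\<in>P. (if Suc n \<in> B then y - x else 0)) = (\<Sum>B\<in>{B \<in> P. Suc n \<in> B}. y - x)"
    using Pi_props(1)[OF P] by (rule sum.inter_filter[symmetric])
  also have "\<dots> = y - x" unfolding one by simp
  finally show ?thesis by simp
qed


lemma binom_shift: "d * (d choose h) = h * (d choose h) + Suc h * (d choose Suc h)"
proof (cases d)
  case 0
  then show ?thesis by (cases h) auto
next
  case (Suc e)
  have 1: "Suc h * (d choose Suc h) = d * (e choose h)" using Suc_times_binomial[of h e] Suc by simp
  have 2: "(d - h) * (d choose h) = d * (e choose h)" using binomial_absorb_comp[of d h] Suc by simp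
  show ?thesis
  proof (cases "h \<le> d")
    case True
    then have "d * (d choose h) = h * (d choose h) + (d - h) * (d choose h)"
      by (metis add_mult_distrib le_add_diff_inverse)
    then show ?thesis using 1 2 by simp
  next
    case False
    then show ?thesis by (simp add: binomial_eq_0)
  qed
qed

lemma binom_shift_real: "real d * real (d choose h) = real h * real (d choose h) + real (Suc h) * real (d choose Suc h)"
  using binom_shift[of d h] by (metis of_nat_add of_nat_mult)

fun QB :: "real \<Rightarrow> real \<Rightarrow> nat \<Rightarrow> nat \<Rightarrow> real" where
  "QB x y 0 h = (if h = 0 then 1 else 0)"
| "QB x y (Suc n) h = (if h = 0 then 0 else QB x y n (h - 1)) + (1 + y + x * real h) * QB x y n h
     + x * real (Suc h) * QB x y n (Suc h)"

lemma B_point: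
  fixes d h :: nat
  shows "real (Suc d choose h) + real (d choose h) * ((y - x) + real (Suc d) * x)
    = (if h = 0 then 0 else real (d choose (h - 1))) + (1 + y + x * real h) * real (d choose h)
      + x * real (Suc h) * real (d choose Suc h)"
proof -
  have p: "real (Suc d choose h) = real (d choose h) + (if h = 0 then 0 else real (d choose (h - 1)))"
    by (cases h) simp_all
  have s: "real d * real (d choose h) = real h * real (d choose h) + real (Suc h) * real (d choose Suc h)"
    by (rule binom_shift_real)
  have "real (d choose h) * ((y - x) + real (Suc d) * x) = real (d choose h) * (1 + y) - real (d choose h)
     + x * (real d * real (d choose h))" by (simp add: algebra_simps)
  also have "\<dots> = real (d choose h) * (1 + y) - real (d choose h) + x * (real h * real (d choose h) + real (Suc h) * real (d choose Suc h))"
    by (simp only: s)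
  finally show ?thesis unfolding p by (simp add: algebra_simps)
qed

lemma Bsum: "(\<Sum>P\<in>SP (Suc n). real (card P - 1 choose h) * wt x y P) = QB x y n h"
proof (induction n arbitrary: h)
  case 0
  have "(\<Sum>P\<in>SP (Suc 0). real (card P - 1 choose h) * wt x y P) = real (card {{Suc 0}} - 1 choose h) * wt x y {{Suc 0}}"
    by (simp add: sum_Pi_Suc Pi0)
  also have "\<dots> = (if h = 0 then 1 else 0)" by (simp add: wt_def cov_def arcs_ins)
  finally show ?case by simp
next
  case (Suc n)
  let ?g = "\<lambda>h P. real (card P - 1 choose h) * wt x y P"
  have "(\<Sum>Q\<in>SP (Suc (Suc n)). ?g h Q) = (\<Sum>P\<in>SP (Suc n). ?g h (insert {Suc (Suc n)} P) + (\<Sum>B\<in>P. ?g h (join (Suc (Suc n)) P B)))"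
    by (rule sum_Pi_Suc)
  also have "\<dots> = (\<Sum>P\<in>SP (Suc n). (if h = 0 then 0 else ?g (h - 1) P) + (1 + y + x * real h) * ?g h P + x * real (Suc h) * ?g (Suc h) P)"
  proof (rule sum.cong[OF refl])
    fix P assume P: "P \<in> SP (Suc n)"
    define d where "d = card P - 1"
    have d: "card P = Suc d" using card_Pi_pos[OF P] unfolding d_def by simp

    have "(\<Sum>B\<in>P. ?g h (join (Suc (Suc n)) P B)) = (\<Sum>B\<in>P. real (card P - 1 choose h) * wt x y P * (if Max B = Suc n then y else x))"
      by (rule sum.cong[OF refl]) (simp add: card_join[OF P] wt_join[OF P])
    also have "\<dots> = real (card P - 1 choose h) * wt x y P * ((y - x) + real (card P) * x)"
      by (simp add: sum_distrib_left[symmetric] sum_last_block[OF P])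
    finally have j: "(\<Sum>B\<in>P. ?g h (join (Suc (Suc n)) P B)) = real (card P - 1 choose h) * wt x y P * ((y - x) + real (card P) * x)" .
    have i: "?g h (insert {Suc (Suc n)} P) = real (card P choose h) * wt x y P"
      by (simp add: card_ins[OF P] wt_ins)
    show "?g h (insert {Suc (Suc n)} P) + (\<Sum>B\<in>P. ?g h (join (Suc (Suc n)) P B)) =
      (if h = 0 then 0 else ?g (h - 1) P) + (1 + y + x * real h) * ?g h P + x * real (Suc h) * ?g (Suc h) P"
    proof -
      let ?w = "wt x y P"
      have "real (card P choose h) * ?w + real (card P - 1 choose h) * ?w * ((y - x) + real (card P) * x)
          = ?w * (real (Suc d choose h) + real (d choose h) * ((y - x) + real (Suc d) * x))"
        unfolding d by (simp add: algebra_simps)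
      also have "\<dots> = ?w * ((if h = 0 then 0 else real (d choose (h - 1))) + (1 + y + x * real h) * real (d choose h)
      + x * real (Suc h) * real (d choose Suc h))" by (simp only: B_point)
      also have "\<dots> = (if h = 0 then 0 else ?g (h - 1) P) + (1 + y + x * real h) * ?g h P + x * real (Suc h) * ?g (Suc h) P"
        unfolding d by (cases "h = 0") (simp_all add: algebra_simps)
      finally show ?thesis unfolding i j .
    qed

  qed
  also have "\<dots> = (\<Sum>P\<in>SP (Suc n). (if h = 0 then 0 else ?g (h - 1) P)) + (1 + y + x * real h) * (\<Sum>P\<in>SP (Suc n). ?g h P) + x * real (Suc h) * (\<Sum>P\<in>SP (Suc n). ?g (Suc h) P)"
    by (simp only: sum.distrib sum_distrib_left)
  also have "\<dots> = (if h = 0 then 0 else QB x y n (h - 1)) + (1 + y + x * real h) * QB x y n h + x * real (Suc h) * QB x y n (Suc h)"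
  proof -
    have e1: "(\<Sum>P\<in>SP (Suc n). (if h = 0 then 0 else ?g (h - 1) P)) = (if h = 0 then 0 else QB x y n (h - 1))"
    proof (cases "h = 0")
      case False
      then show ?thesis using Suc.IH[of "h - 1"] by simp
    qed simp
    show ?thesis unfolding e1 Suc.IH ..
  qed



  finally show ?case by simp
qed


definition ss :: "nat set set \<Rightarrow> nat" where "ss P = card {B \<in> P. card B = 1}"
definition ns :: "nat set set \<Rightarrow> nat" where "ns P = card {B \<in> P. card B \<noteq> 1}"
definition ph :: "nat \<Rightarrow> nat \<Rightarrow> nat \<Rightarrow> real" where
  "ph h s t = (if s \<le> h then real (t choose (h - s)) else 0)"

fun QF :: "real \<Rightarrow> nat \<Rightarrow> nat \<Rightarrow> real" where
  "QF x 0 h = (if h = 0 then 1 else 0)"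
| "QF x (Suc n) h = (if h = 0 then 0 else QF x n (h - 1)) + x * real h * QF x n h
     + x * real (Suc h) * QF x n (Suc h)"

lemma ph_Suc: "ph h (Suc s) t = (if h = 0 then 0 else ph (h - 1) s t)"
  by (cases h) (auto simp: ph_def Suc_diff_le)

lemma ph_step: "real s * ph h (s - 1) (Suc t) + real t * ph h s t = real h * ph h s t + real (Suc h) * ph (Suc h) s t"
proof (cases "s \<le> h")
  case True
  define b where "b = h - s"
  have hb: "h = b + s" using True unfolding b_def by simp
  have e1: "ph h s t = real (t choose b)" using True unfolding ph_def b_def by simp
  have e2: "ph (Suc h) s t = real (t choose Suc b)" using True unfolding ph_def b_def by (simp add: Suc_diff_le)
  have e3: "real s * ph h (s - 1) (Suc t) = real s * (real (t choose b) + real (t choose Suc b))"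
  proof (cases s)
    case (Suc s')
    then have "h - (s - 1) = Suc b" using True unfolding b_def by simp
    then show ?thesis using True Suc unfolding ph_def by simp
  qed simp
  have sh: "real t * real (t choose b) = real b * real (t choose b) + real (Suc b) * real (t choose Suc b)"
    by (rule binom_shift_real)
  show ?thesis using sh unfolding e1 e2 e3 by (simp add: hb algebra_simps)
next
  case False
  show ?thesis
  proof (cases "s = Suc h")
    case True
    then show ?thesis unfolding ph_def by simp
  next
    case False
    then have "\<not> s - 1 \<le> h" "\<not> s \<le> Suc h" using \<open>\<not> s \<le> h\<close> by auto
    then show ?thesis using \<open>\<not> s \<le> h\<close> unfolding ph_def by simp

  qed
qed

lemma card_arcs_ins: "card (arcs (insert {m} P)) = card (arcs P)"
  by (simp add: arcs_ins)

lemma card_arcs_join: "P \<in> SP n \<Longrightarrow> B \<in> P \<Longrightarrow> card (arcs (join (Suc n) P B)) = Suc (card (arcs P))"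
  using arcs_join[of P n B] new_arc_notin[of P n "Max B"] finite_arcs[of P n] by simp

lemma ss_ns_ins:
  assumes P: "P \<in> SP n"
  shows "ss (insert {Suc n} P) = Suc (ss P)" "ns (insert {Suc n} P) = ns P"
proof -
  have nin: "{Suc n} \<notin> P" using Pi_notin[OF P] by blast
  have fin: "finite P" using Pi_props(1)[OF P] .
  have "{B \<in> insert {Suc n} P. card B = 1} = insert {Suc n} {B \<in> P. card B = 1}" by auto
  then show "ss (insert {Suc n} P) = Suc (ss P)" unfolding ss_def using nin fin by simp
  have "{B \<in> insert {Suc n} P. card B \<noteq> 1} = {B \<in> P. card B \<noteq> 1}" by auto
  then show "ns (insert {Suc n} P) = ns P" unfolding ns_def by simp
qed

lemma ss_ns_join:
  assumes P: "P \<in> SP n" and B: "B \<in> P"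
  shows "ss (join (Suc n) P B) = (if card B = 1 then ss P - 1 else ss P)"
        "ns (join (Suc n) P B) = (if card B = 1 then Suc (ns P) else ns P)"
proof -
  have fin: "finite P" using Pi_props(1)[OF P] .
  have finB: "finite B" "B \<noteq> {}" using Pi_props(2,3)[OF P B] by auto
  have nB: "Suc n \<notin> B" using Pi_notin[OF P B] .
  have cB: "card (insert (Suc n) B) \<noteq> 1"
  proof -
    have "card (insert (Suc n) B) = Suc (card B)" using finB nB by simp
    moreover have "card B \<ge> 1" using finB by (simp add: Suc_leI card_gt_0_iff)
    ultimately show ?thesis by simp
  qed
  have nI: "insert (Suc n) B \<notin> P" using Pi_notin[OF P] by blast
  have s1: "{C \<in> join (Suc n) P B. card C = 1} = {C \<in> P. card C = 1} - {B}"
    unfolding join_def using cB by auto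
  have s2: "{C \<in> join (Suc n) P B. card C \<noteq> 1} = insert (insert (Suc n) B) ({C \<in> P. card C \<noteq> 1} - {B})"
    unfolding join_def using cB by auto
  show "ss (join (Suc n) P B) = (if card B = 1 then ss P - 1 else ss P)"
    unfolding ss_def s1 using fin B by (simp add: card_Diff_singleton_if)
  have "insert (Suc n) B \<notin> {C \<in> P. card C \<noteq> 1} - {B}" using nI by blast
  then have "card (insert (insert (Suc n) B) ({C \<in> P. card C \<noteq> 1} - {B})) = Suc (card ({C \<in> P. card C \<noteq> 1} - {B}))"
    using fin by simp
  moreover have "card ({C \<in> P. card C \<noteq> 1} - {B}) = (if card B = 1 then card {C \<in> P. card C \<noteq> 1} else card {C \<in> P. card C \<noteq> 1} - 1)"
    using fin B by (simp add: card_Diff_singleton_if)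
  moreover have "card B \<noteq> 1 \<Longrightarrow> card {C \<in> P. card C \<noteq> 1} \<ge> 1"
  proof -
    assume "card B \<noteq> 1"
    then have "B \<in> {C \<in> P. card C \<noteq> 1}" using B by simp
    moreover have "finite {C \<in> P. card C \<noteq> 1}" using fin by simp
    ultimately show ?thesis by (metis One_nat_def Suc_leI card_gt_0_iff empty_iff)
  qed
  ultimately show "ns (join (Suc n) P B) = (if card B = 1 then Suc (ns P) else ns P)"
    unfolding ns_def s2 by auto

qed

lemma sum_split_card1:
  assumes "finite P"
  shows "(\<Sum>B\<in>P. (if card B = 1 then a else b)) = real (card {B \<in> P. card B = 1}) * a + real (card {B \<in> P. card B \<noteq> 1}) * (b::real)"
proof -
  have "(\<Sum>B\<in>P. (if card B = 1 then a else b)) = (\<Sum>B\<in>{B \<in> P. card B = 1}. a) + (\<Sum>B\<in>{B \<in> P. card B \<noteq> 1}. b)"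
    using assms by (simp add: sum.If_cases Int_def)
  then show ?thesis by simp
qed

lemma ss_pos: "P \<in> SP n \<Longrightarrow> B \<in> P \<Longrightarrow> card B = 1 \<Longrightarrow> ss P \<ge> 1"
proof -
  assume P: "P \<in> SP n" and "B \<in> P" "card B = 1"
  then have "B \<in> {B \<in> P. card B = 1}" by simp
  moreover have "finite {B \<in> P. card B = 1}" using Pi_props(1)[OF P] by simp
  ultimately show ?thesis unfolding ss_def by (metis One_nat_def Suc_leI card_gt_0_iff empty_iff)
qed

lemma Fsum: "(\<Sum>P\<in>SP n. x ^ card (arcs P) * ph h (ss P) (ns P)) = QF x n h"
proof (induction n arbitrary: h)
  case 0
  show ?case by (simp add: Pi0 ss_def ns_def ph_def)
next
  case (Suc n)
  let ?g = "\<lambda>h P. x ^ card (arcs P) * ph h (ss P) (ns P)"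
  have "(\<Sum>Q\<in>SP (Suc n). ?g h Q) = (\<Sum>P\<in>SP n. ?g h (insert {Suc n} P) + (\<Sum>B\<in>P. ?g h (join (Suc n) P B)))"
    by (rule sum_Pi_Suc)
  also have "\<dots> = (\<Sum>P\<in>SP n. (if h = 0 then 0 else ?g (h - 1) P) + x * real h * ?g h P + x * real (Suc h) * ?g (Suc h) P)"
  proof (rule sum.cong[OF refl])
    fix P assume P: "P \<in> SP n"
    let ?w = "x ^ card (arcs P)"
    let ?s = "ss P" and ?t = "ns P"
    have i: "?g h (insert {Suc n} P) = ?w * (if h = 0 then 0 else ph (h - 1) ?s ?t)"
      by (simp add: card_arcs_ins ss_ns_ins[OF P] ph_Suc)
    have "(\<Sum>B\<in>P. ?g h (join (Suc n) P B)) = (\<Sum>B\<in>P. x * ?w * (if card B = 1 then ph h (?s - 1) (Suc ?t) else ph h ?s ?t))"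
      by (rule sum.cong[OF refl]) (simp add: card_arcs_join[OF P] ss_ns_join[OF P])
    also have "\<dots> = x * ?w * (\<Sum>B\<in>P. (if card B = 1 then ph h (?s - 1) (Suc ?t) else ph h ?s ?t))"
      by (simp add: sum_distrib_left)
    also have "\<dots> = x * ?w * (real ?s * ph h (?s - 1) (Suc ?t) + real ?t * ph h ?s ?t)"
      using sum_split_card1[OF Pi_props(1)[OF P]] unfolding ss_def ns_def by simp
    also have "\<dots> = x * ?w * (real h * ph h ?s ?t + real (Suc h) * ph (Suc h) ?s ?t)"
      by (simp only: ph_step)
    finally have j: "(\<Sum>B\<in>P. ?g h (join (Suc n) P B)) = x * ?w * (real h * ph h ?s ?t + real (Suc h) * ph (Suc h) ?s ?t)" .
    show "?g h (insert {Suc n} P) + (\<Sum>B\<in>P. ?g h (join (Suc n) P B)) =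
      (if h = 0 then 0 else ?g (h - 1) P) + x * real h * ?g h P + x * real (Suc h) * ?g (Suc h) P"
      unfolding i j by (simp add: algebra_simps)
  qed
  also have "\<dots> = (\<Sum>P\<in>SP n. (if h = 0 then 0 else ?g (h - 1) P)) + x * real h * (\<Sum>P\<in>SP n. ?g h P) + x * real (Suc h) * (\<Sum>P\<in>SP n. ?g (Suc h) P)"
    by (simp only: sum.distrib sum_distrib_left)
  also have "\<dots> = (if h = 0 then 0 else QF x n (h - 1)) + x * real h * QF x n h + x * real (Suc h) * QF x n (Suc h)"
  proof -
    have e1: "(\<Sum>P\<in>SP n. (if h = 0 then 0 else ?g (h - 1) P)) = (if h = 0 then 0 else QF x n (h - 1))"
    proof (cases "h = 0")
      case False
      then show ?thesis using Suc.IH[of "h - 1"] by simp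
    qed simp
    show ?thesis unfolding e1 Suc.IH ..
  qed
  finally show ?case by simp
qed

lemma Fe_QF: "Fe n x = QF x n 0"
proof -
  have "Fe n x = (\<Sum>P\<in>SP n. if feasible P then x ^ card (arcs P) else 0)"
    unfolding Fe_def by (rule sum.inter_filter[OF finite_Pi])
  also have "\<dots> = (\<Sum>P\<in>SP n. x ^ card (arcs P) * ph 0 (ss P) (ns P))"
  proof (rule sum.cong[OF refl])
    fix P assume P: "P \<in> SP n"
    have "feasible P \<longleftrightarrow> ss P = 0"
    proof -
      have c2: "2 \<le> card B \<longleftrightarrow> card B \<noteq> 1" if "B \<in> P" for B
      proof -
        have "card B \<noteq> 0" using Pi_props(2,3)[OF P that] by simp
        then show ?thesis by linarith
      qed
      have "feasible P \<longleftrightarrow> (\<forall>B\<in>P. card B \<noteq> 1)" unfolding feasible_def using c2 by blast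
      also have "\<dots> \<longleftrightarrow> {B \<in> P. card B = 1} = {}" by blast
      finally have "feasible P \<longleftrightarrow> {B \<in> P. card B = 1} = {}" .

      also have "\<dots> \<longleftrightarrow> ss P = 0" unfolding ss_def using Pi_props(1)[OF P] by simp
      finally show ?thesis .
    qed
    then show "(if feasible P then x ^ card (arcs P) else 0) = x ^ card (arcs P) * ph 0 (ss P) (ns P)"
      by (simp add: ph_def)
  qed
  also have "\<dots> = QF x n 0" by (rule Fsum)
  finally show ?thesis .
qed


definition visn :: "nat set set \<Rightarrow> nat \<Rightarrow> bool" where
  "visn P v \<longleftrightarrow> \<not> (\<exists>i k. (i, k) \<in> arcs P \<and> i < v \<and> v < k)"

definition VV :: "nat set set \<Rightarrow> nat set" where
  "VV P = {v \<in> Max ` P. visn P v}"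

definition rk :: "nat set \<Rightarrow> nat \<Rightarrow> nat" where
  "rk V v = card {u \<in> V. u \<le> v}"

lemma Max_inj: "P \<in> SP n \<Longrightarrow> inj_on Max P"
proof (rule inj_onI)
  fix B C assume P: "P \<in> SP n" and B: "B \<in> P" and C: "C \<in> P" and e: "Max B = Max C"
  have "Max B \<in> B" "Max C \<in> C" using Max_Pi[OF P B] Max_Pi[OF P C] by auto
  then have "B \<inter> C \<noteq> {}" using e by auto
  then show "B = C" using Pi_props(6)[OF P B C] by blast
qed

lemma finite_VV: "P \<in> SP n \<Longrightarrow> finite (VV P)"
  unfolding VV_def using Pi_props(1) by simp

lemma VV_le: "P \<in> SP n \<Longrightarrow> v \<in> VV P \<Longrightarrow> v \<le> n"
  unfolding VV_def using Max_Pi by auto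

lemma visn_top: "P \<in> SP n \<Longrightarrow> n \<le> v \<Longrightarrow> visn P v"
proof -
  assume P: "P \<in> SP n" and v: "n \<le> v"
  have "k \<le> n" if "(i, k) \<in> arcs P" for i k using arcs_sub[OF P] that by auto
  then show ?thesis unfolding visn_def using v by fastforce
qed

lemma noncrossing_ins: "noncrossing (insert {m} P) = noncrossing P"
  by (simp add: noncrossing_def arcs_ins)

lemma VV_ins:
  assumes P: "P \<in> SP n"
  shows "VV (insert {Suc n} P) = insert (Suc n) (VV P)" "Suc n \<notin> VV P"
proof -
  have "visn (insert {Suc n} P) = visn P" by (rule ext) (simp add: visn_def arcs_ins)
  moreover have "visn P (Suc n)" by (rule visn_top[OF P]) simp
  ultimately show "VV (insert {Suc n} P) = insert (Suc n) (VV P)" unfolding VV_def by auto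
  show "Suc n \<notin> VV P" using VV_le[OF P] by fastforce
qed

lemma noncrossing_join:
  assumes P: "P \<in> SP n" and B: "B \<in> P"
  shows "noncrossing (join (Suc n) P B) \<longleftrightarrow> noncrossing P \<and> visn P (Max B)"
proof -
  have A: "arcs (join (Suc n) P B) = insert (Max B, Suc n) (arcs P)" by (rule arcs_join[OF P B])
  have kn: "k \<le> n" if "(i, k) \<in> arcs P" for i k using arcs_sub[OF P] that by auto
  show ?thesis unfolding noncrossing_def A visn_def
  proof (intro iffI conjI)
    assume h: "\<not> (\<exists>i j k l. (i, k) \<in> insert (Max B, Suc n) (arcs P) \<and> (j, l) \<in> insert (Max B, Suc n) (arcs P) \<and> i < j \<and> j < k \<and> k < l)"
    show "\<not> (\<exists>i j k l. (i, k) \<in> arcs P \<and> (j, l) \<in> arcs P \<and> i < j \<and> j < k \<and> k < l)"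
      using h by blast
    show "\<not> (\<exists>i k. (i, k) \<in> arcs P \<and> i < Max B \<and> Max B < k)"
    proof
      assume "\<exists>i k. (i, k) \<in> arcs P \<and> i < Max B \<and> Max B < k"
      then obtain i k where ik: "(i, k) \<in> arcs P" "i < Max B" "Max B < k" by blast
      have "k < Suc n" using kn[OF ik(1)] by simp
      then show False using h ik by blast
    qed
  next
    assume h: "\<not> (\<exists>i j k l. (i, k) \<in> arcs P \<and> (j, l) \<in> arcs P \<and> i < j \<and> j < k \<and> k < l) \<and>
      \<not> (\<exists>i k. (i, k) \<in> arcs P \<and> i < Max B \<and> Max B < k)"
    show "\<not> (\<exists>i j k l. (i, k) \<in> insert (Max B, Suc n) (arcs P) \<and> (j, l) \<in> insert (Max B, Suc n) (arcs P) \<and> i < j \<and> j < k \<and> k < l)"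
    proof
      assume "\<exists>i j k l. (i, k) \<in> insert (Max B, Suc n) (arcs P) \<and> (j, l) \<in> insert (Max B, Suc n) (arcs P) \<and> i < j \<and> j < k \<and> k < l"
      then obtain i j k l where c: "(i, k) \<in> insert (Max B, Suc n) (arcs P)" "(j, l) \<in> insert (Max B, Suc n) (arcs P)"
        "i < j" "j < k" "k < l" by blast
      show False
      proof (cases "(i, k) = (Max B, Suc n)")
        case True
        then have "l > Suc n" using c by simp
        moreover have "l \<le> Suc n"
        proof (cases "(j, l) = (Max B, Suc n)")
          case False
          then show ?thesis using c(2) kn by fastforce
        qed simp
        ultimately show False by simp
      next
        case F1: False
        then have ik: "(i, k) \<in> arcs P" using c(1) by blast
        show False
        proof (cases "(j, l) = (Max B, Suc n)")
          case True
          then show False using h ik c by blast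
        next
          case False
          then show False using h ik c by blast
        qed
      qed
    qed
  qed
qed

lemma Max_join: 
  assumes P: "P \<in> SP n" and B: "B \<in> P"
  shows "Max (insert (Suc n) B) = Suc n"
proof -
  have fin: "finite B" "B \<noteq> {}" using Pi_props(2,3)[OF P B] by auto
  have mb: "Max B \<le> n" using Max_Pi[OF P B] by simp
  have "max (Suc n) (Max B) = Suc n" by (rule max.absorb1) (use mb in linarith)
  then show ?thesis unfolding Max_insert[OF fin] .

qed

lemma VV_join:
  assumes P: "P \<in> SP n" and B: "B \<in> P" and vB: "visn P (Max B)"
  shows "VV (join (Suc n) P B) = insert (Suc n) {v \<in> VV P. v < Max B}"
proof -
  let ?p = "Max B"
  have A: "arcs (join (Suc n) P B) = insert (?p, Suc n) (arcs P)" by (rule arcs_join[OF P B])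
  have vj: "visn (join (Suc n) P B) v \<longleftrightarrow> visn P v \<and> \<not> (?p < v \<and> v < Suc n)" for v
    unfolding visn_def A by auto
  have M: "Max ` join (Suc n) P B = insert (Suc n) (Max ` (P - {B}))"
    unfolding join_def using Max_join[OF P B] by simp
  have le: "v \<le> n" if "v \<in> Max ` P" for v using that Max_Pi[OF P] by auto
  have top: "visn P (Suc n)" by (rule visn_top[OF P]) simp
  have neq: "Max C \<noteq> ?p" if "C \<in> P - {B}" for C using Max_inj[OF P] that B by (auto simp: inj_on_def)
  show ?thesis
  proof (rule set_eqI)
    fix v
    show "v \<in> VV (join (Suc n) P B) \<longleftrightarrow> v \<in> insert (Suc n) {v \<in> VV P. v < ?p}"
    proof
      assume "v \<in> VV (join (Suc n) P B)"
      then have v: "v \<in> insert (Suc n) (Max ` (P - {B}))" "visn P v" "\<not> (?p < v \<and> v < Suc n)"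
        unfolding VV_def M vj by auto
      show "v \<in> insert (Suc n) {v \<in> VV P. v < ?p}"
      proof (cases "v = Suc n")
        case False
        then obtain C where C: "C \<in> P - {B}" "v = Max C" using v(1) by auto
        have "v \<le> n" using le C by auto
        then have "v \<le> ?p" using v(3) by simp
        then have "v < ?p" using neq[OF C(1)] C(2) by simp
        moreover have "v \<in> VV P" unfolding VV_def using C v(2) by auto
        ultimately show ?thesis by simp
      qed simp
    next
      assume v: "v \<in> insert (Suc n) {v \<in> VV P. v < ?p}"
      show "v \<in> VV (join (Suc n) P B)"
      proof (cases "v = Suc n")
        case True
        then show ?thesis unfolding VV_def M vj using top by simp
      next
        case False
        then have v2: "v \<in> VV P" "v < ?p" using v by auto
        then obtain C where C: "C \<in> P" "v = Max C" "visn P v" unfolding VV_def by auto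
        have "C \<noteq> B" using C v2(2) by auto
        then have "v \<in> Max ` (P - {B})" using C by auto
        then show ?thesis unfolding VV_def M vj using C(3) v2(2) by auto
      qed
    qed
  qed
qed

lemma card_VV_join:
  assumes P: "P \<in> SP n" and B: "B \<in> P" and vB: "visn P (Max B)"
  shows "card (VV (join (Suc n) P B)) = rk (VV P) (Max B)"
proof -
  have fin: "finite (VV P)" by (rule finite_VV[OF P])
  have pin: "Max B \<in> VV P" unfolding VV_def using B vB by auto
  have "Suc n \<notin> {v \<in> VV P. v < Max B}" using VV_le[OF P] by fastforce
  then have "card (VV (join (Suc n) P B)) = Suc (card {v \<in> VV P. v < Max B})"
    unfolding VV_join[OF P B vB] using fin by simp
  also have "{u \<in> VV P. u \<le> Max B} = insert (Max B) {v \<in> VV P. v < Max B}" using pin by auto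
  then have "Suc (card {v \<in> VV P. v < Max B}) = rk (VV P) (Max B)" unfolding rk_def using fin by simp
  finally show ?thesis .
qed

lemma rank_sum:
  fixes G :: "nat \<Rightarrow> real"
  assumes "finite V"
  shows "(\<Sum>v\<in>V. G (rk V v)) = (\<Sum>i\<in>{1..card V}. G i)"
  using assms
proof (induction V rule: finite_linorder_max_induct)
  case empty
  then show ?case by simp
next
  case (insert b V)
  have r1: "rk (insert b V) v = rk V v" if "v \<in> V" for v
  proof -
    have "{u \<in> insert b V. u \<le> v} = {u \<in> V. u \<le> v}" using insert.hyps(2) that by auto
    then show ?thesis unfolding rk_def by simp
  qed
  have bn: "b \<notin> V" using insert.hyps(2) by auto
  have r2: "rk (insert b V) b = Suc (card V)"
  proof -
    have "{u \<in> insert b V. u \<le> b} = insert b V" using insert.hyps(2) by auto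
    then show ?thesis unfolding rk_def using insert.hyps(1) bn by simp
  qed
  have "(\<Sum>v\<in>insert b V. G (rk (insert b V) v)) = G (rk (insert b V) b) + (\<Sum>v\<in>V. G (rk (insert b V) v))"
    using insert.hyps(1) bn by simp
  also have "(\<Sum>v\<in>V. G (rk (insert b V) v)) = (\<Sum>v\<in>V. G (rk V v))" using r1 by simp
  also have "\<dots> = (\<Sum>i\<in>{1..card V}. G i)" by (rule insert.IH)
  also have "G (rk (insert b V) b) + (\<Sum>i\<in>{1..card V}. G i) = (\<Sum>i\<in>{1..Suc (card V)}. G i)"
    unfolding r2 by (simp add: add.commute)
  also have "Suc (card V) = card (insert b V)" using insert.hyps(1) bn by simp
  finally show ?case .
qed


fun QN :: "real \<Rightarrow> real \<Rightarrow> nat \<Rightarrow> nat \<Rightarrow> real" where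
  "QN x y 0 h = (if h = 0 then 1 else 0)"
| "QN x y (Suc n) h = (if h = 0 then 0 else QN x y n (h - 1)) + (1 + y) * QN x y n h + x * QN x y n (Suc h)"

lemma top_in_VV: "P \<in> SP (Suc n) \<Longrightarrow> Suc n \<in> VV P"
proof -
  assume P: "P \<in> SP (Suc n)"
  have "Suc n \<in> \<Union>P" using Pi_props(5)[OF P] by simp
  then obtain C where C: "C \<in> P" "Suc n \<in> C" by blast
  have "Max C \<le> Suc n" "Suc n \<le> Max C" using Max_Pi[OF P C(1)] C(2) by auto
  then have "Max C = Suc n" by simp
  moreover have "visn P (Suc n)" by (rule visn_top[OF P]) simp
  ultimately show ?thesis unfolding VV_def using C(1) by force
qed

lemma rk_top:
  assumes P: "P \<in> SP (Suc n)" and v: "v \<in> VV P"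
  shows "v = Suc n \<longleftrightarrow> rk (VV P) v = card (VV P)"
proof
  have fin: "finite (VV P)" by (rule finite_VV[OF P])
  have le: "u \<le> Suc n" if "u \<in> VV P" for u using VV_le[OF P that] .
  show "v = Suc n \<Longrightarrow> rk (VV P) v = card (VV P)"
  proof -
    assume "v = Suc n"
    then have "{u \<in> VV P. u \<le> v} = VV P" using le by auto
    then show ?thesis unfolding rk_def by simp
  qed
  show "rk (VV P) v = card (VV P) \<Longrightarrow> v = Suc n"
  proof (rule ccontr)
    assume r: "rk (VV P) v = card (VV P)" and ne: "v \<noteq> Suc n"
    then have "v < Suc n" using le[OF v] by simp
    then have "Suc n \<notin> {u \<in> VV P. u \<le> v}" by simp
    then have "{u \<in> VV P. u \<le> v} \<subset> VV P" using top_in_VV[OF P] by blast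
    then have "card {u \<in> VV P. u \<le> v} < card (VV P)" by (rule psubset_card_mono[OF fin])

    then show False using r unfolding rk_def by simp
  qed
qed

lemma sum_lessThan_choose: "(\<Sum>k<m. real (k choose h)) = real (m choose Suc h)"
proof (cases m)
  case (Suc m')
  have "(\<Sum>k<m. real (k choose h)) = real (\<Sum>k\<le>m'. k choose h)" using Suc by (simp add: lessThan_Suc_atMost)
  also have "\<dots> = real (Suc m' choose Suc h)" by (simp only: sum_choose_upper)
  finally show ?thesis using Suc by simp
qed simp

lemma sum_top_choose:
  assumes c: "c \<ge> 1"
  shows "(\<Sum>i\<in>{1..c}. real (i - 1 choose h) * (if i = c then y else x)) = y * real (c - 1 choose h) + x * real (c - 1 choose Suc h)"
proof -
  obtain d where d: "c = Suc d" using c by (cases c) auto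
  have "{1..c} = insert c {1..d}" using d by auto
  then have "(\<Sum>i\<in>{1..c}. real (i - 1 choose h) * (if i = c then y else x))
      = real (d choose h) * y + (\<Sum>i\<in>{1..d}. real (i - 1 choose h) * (if i = c then y else x))"
    using d by simp
  also have "(\<Sum>i\<in>{1..d}. real (i - 1 choose h) * (if i = c then y else x)) = x * (\<Sum>i\<in>{1..d}. real (i - 1 choose h))"
    unfolding sum_distrib_left using d by (intro sum.cong) auto
  also have "(\<Sum>i\<in>{1..d}. real (i - 1 choose h)) = (\<Sum>k<d. real (k choose h))"
  proof -
    have "(\<Sum>i\<in>{1..d}. real (i - 1 choose h)) = (\<Sum>k<d. real (Suc k - 1 choose h))"
      by (simp only: sum.atLeast1_atMost_eq One_nat_def)
    then show ?thesis by simp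
  qed
  also have "\<dots> = real (d choose Suc h)" by (rule sum_lessThan_choose)
  finally show ?thesis using d by (simp add: algebra_simps)
qed

lemma VV_image: "P \<in> SP n \<Longrightarrow> VV P = Max ` {B \<in> P. visn P (Max B)}"
  unfolding VV_def by auto

lemma NCsum: "(\<Sum>P\<in>SP (Suc n). (if noncrossing P then real (card (VV P) - 1 choose h) * wt x y P else 0)) = QN x y n h"
proof (induction n arbitrary: h)
  case 0
  have vv: "VV {{Suc 0}} = {Suc 0}" unfolding VV_def visn_def by (simp add: arcs_ins)
  have "(\<Sum>P\<in>SP (Suc 0). (if noncrossing P then real (card (VV P) - 1 choose h) * wt x y P else 0))
      = (if noncrossing {{Suc 0}} then real (card (VV {{Suc 0}}) - 1 choose h) * wt x y {{Suc 0}} else 0)"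
    by (simp add: sum_Pi_Suc Pi0)
  also have "\<dots> = (if h = 0 then 1 else 0)" unfolding vv by (simp add: wt_def cov_def arcs_ins noncrossing_def)
  finally show ?case by simp
next
  case (Suc n)
  let ?g = "\<lambda>h P. (if noncrossing P then real (card (VV P) - 1 choose h) * wt x y P else 0)"
  have "(\<Sum>Q\<in>SP (Suc (Suc n)). ?g h Q) = (\<Sum>P\<in>SP (Suc n). ?g h (insert {Suc (Suc n)} P) + (\<Sum>B\<in>P. ?g h (join (Suc (Suc n)) P B)))"
    by (rule sum_Pi_Suc)
  also have "\<dots> = (\<Sum>P\<in>SP (Suc n). (if h = 0 then 0 else ?g (h - 1) P) + (1 + y) * ?g h P + x * ?g (Suc h) P)"
  proof (rule sum.cong[OF refl])
    fix P assume P: "P \<in> SP (Suc n)"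
    let ?V = "VV P"
    let ?w = "wt x y P"
    define c where "c = card ?V"
    have fin: "finite ?V" by (rule finite_VV[OF P])
    have c1: "c \<ge> 1" unfolding c_def using top_in_VV[OF P] fin by (metis One_nat_def Suc_leI card_gt_0_iff empty_iff)
    define d where "d = c - 1"
    have cd: "c = Suc d" using c1 unfolding d_def by simp
    have i: "?g h (insert {Suc (Suc n)} P) = (if noncrossing P then real (c choose h) * ?w else 0)"
    proof -
      have "card (VV (insert {Suc (Suc n)} P)) = Suc c" unfolding c_def VV_ins[OF P] using VV_ins(2)[OF P] fin by simp
      then show ?thesis by (simp add: noncrossing_ins wt_ins)
    qed
    have j: "(\<Sum>B\<in>P. ?g h (join (Suc (Suc n)) P B)) = (if noncrossing P then ?w * (y * real (d choose h) + x * real (d choose Suc h)) else 0)"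
    proof (cases "noncrossing P")
      case False
      then show ?thesis by (simp add: noncrossing_join[OF P])
    next
      case True
      let ?G = "\<lambda>v. real (rk ?V v - 1 choose h) * (?w * (if v = Suc n then y else x))"
      have "(\<Sum>B\<in>P. ?g h (join (Suc (Suc n)) P B)) = (\<Sum>B\<in>P. if visn P (Max B) then ?G (Max B) else 0)"
      proof (rule sum.cong[OF refl])
        fix B assume B: "B \<in> P"
        show "?g h (join (Suc (Suc n)) P B) = (if visn P (Max B) then ?G (Max B) else 0)"
        proof (cases "visn P (Max B)")
          case True
          then show ?thesis using \<open>noncrossing P\<close>
            by (simp add: noncrossing_join[OF P B] card_VV_join[OF P B] wt_join[OF P B])
        next
          case False
          then show ?thesis by (simp add: noncrossing_join[OF P B])
        qed
      qed
      also have "\<dots> = (\<Sum>B\<in>{B \<in> P. visn P (Max B)}. ?G (Max B))"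
        by (rule sum.inter_filter[symmetric]) (rule Pi_props(1)[OF P])
      also have "\<dots> = (\<Sum>v\<in>?V. ?G v)"
      proof -
        have "inj_on Max {B \<in> P. visn P (Max B)}" using Max_inj[OF P] by (rule inj_on_subset) auto
        then show ?thesis unfolding VV_image[OF P] by (simp add: sum.reindex)
      qed
      also have "\<dots> = ?w * (\<Sum>v\<in>?V. real (rk ?V v - 1 choose h) * (if rk ?V v = c then y else x))"
        unfolding sum_distrib_left
      proof (rule sum.cong[OF refl])
        fix v assume v: "v \<in> ?V"
        show "?G v = ?w * (real (rk ?V v - 1 choose h) * (if rk ?V v = c then y else x))"
          using rk_top[OF P v] unfolding c_def by simp
      qed
      also have "(\<Sum>v\<in>?V. real (rk ?V v - 1 choose h) * (if rk ?V v = c then y else x)) = (\<Sum>i\<in>{1..c}. real (i - 1 choose h) * (if i = c then y else x))"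
        unfolding c_def by (rule rank_sum[OF fin])
      also have "\<dots> = y * real (d choose h) + x * real (d choose Suc h)"
        using sum_top_choose[OF c1] unfolding d_def .
      finally show ?thesis using True by simp
    qed
    have gs: "?g k P = (if noncrossing P then real (d choose k) * ?w else 0)" for k
      unfolding c_def[symmetric] d_def by simp
    have p: "real (c choose h) = real (d choose h) + (if h = 0 then 0 else real (d choose (h - 1)))"
      unfolding cd by (cases h) simp_all
    show "?g h (insert {Suc (Suc n)} P) + (\<Sum>B\<in>P. ?g h (join (Suc (Suc n)) P B)) =
      (if h = 0 then 0 else ?g (h - 1) P) + (1 + y) * ?g h P + x * ?g (Suc h) P"
      unfolding i j gs p by (simp add: algebra_simps)
  qed
  also have "\<dots> = (\<Sum>P\<in>SP (Suc n). (if h = 0 then 0 else ?g (h - 1) P)) + (1 + y) * (\<Sum>P\<in>SP (Suc n). ?g h P) + x * (\<Sum>P\<in>SP (Suc n). ?g (Suc h) P)"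
    by (simp only: sum.distrib sum_distrib_left)
  also have "\<dots> = (if h = 0 then 0 else QN x y n (h - 1)) + (1 + y) * QN x y n h + x * QN x y n (Suc h)"
  proof -
    have e1: "(\<Sum>P\<in>SP (Suc n). (if h = 0 then 0 else ?g (h - 1) P)) = (if h = 0 then 0 else QN x y n (h - 1))"
    proof (cases "h = 0")
      case False
      then show ?thesis using Suc.IH[of "h - 1"] by simp
    qed simp
    show ?thesis unfolding e1 Suc.IH ..
  qed
  finally show ?case by simp
qed


lemma Bpoly_QB: "Bpoly (Suc k) x y = QB x y k 0"
proof -
  have "Bpoly (Suc k) x y = (\<Sum>P\<in>SP (Suc k). real (card P - 1 choose 0) * wt x y P)"
    unfolding Bpoly_def wt_def by simp
  then show ?thesis using Bsum[where n=k and h=0 and x=x and y=y] by simp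
qed

lemma QB_QF: "QB x y n h = (\<Sum>k\<le>n. real (n choose k) * (y + 1) ^ (n - k) * QF x k h)"
proof (rule binom_level[where \<alpha> = "\<lambda>h. x * real h" and \<beta> = "\<lambda>h. x * real (Suc h)"])
  show "\<And>h. QB x y 0 h = QF x 0 h" by simp
  show "\<And>k h. QF x (Suc k) h = (if h = 0 then 0 else QF x k (h - 1)) + x * real h * QF x k h + x * real (Suc h) * QF x k (Suc h)"
    by simp
  show "\<And>n h. QB x y (Suc n) h = (if h = 0 then 0 else QB x y n (h - 1)) + x * real h * QB x y n h + x * real (Suc h) * QB x y n (Suc h) + (y + 1) * QB x y n h"
    by (simp add: algebra_simps)
qed

lemma part1: "(\<Sum>k=0..n. (-1) ^ (n - k) * real (n choose k) * (y + 1) ^ (n - k) * Bpoly (k + 1) x y) = Fe n x"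
proof -
  have b: "Bpoly (Suc k) x y = (\<Sum>j\<le>k. real (k choose j) * (y + 1) ^ (k - j) * Fe j x)" for k
    unfolding Bpoly_QB QB_QF Fe_QF ..
  have "(\<Sum>k\<le>n. (-1) ^ (n - k) * real (n choose k) * (y + 1) ^ (n - k) * Bpoly (Suc k) x y) = Fe n x"
    by (rule binom_inv[where f = "\<lambda>j. Fe j x", OF b])
  then show ?thesis by (simp add: atLeast0AtMost)
qed

lemma Cpoly_QN: "Cpoly (Suc k) x y = QN x y k 0"
proof -
  have "Cpoly (Suc k) x y = (\<Sum>P\<in>SP (Suc k). if noncrossing P then wt x y P else 0)"
    unfolding Cpoly_def nc_partitions_def wt_def by (rule sum.inter_filter[OF finite_Pi])
  then show ?thesis using NCsum[where n=k and h=0 and x=x and y=y] by (simp only: binomial_n_0 of_nat_1 mult_1)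
qed

lemma QN_QE: "QN x y n h = (\<Sum>k\<le>n. real (n choose k) * (y + 1) ^ (n - k) * QE x k h)"
proof (rule binom_level[where \<alpha> = "\<lambda>h. 0" and \<beta> = "\<lambda>h. x"])
  show "\<And>h. QN x y 0 h = QE x 0 h" by simp
  show "\<And>k h. QE x (Suc k) h = (if h = 0 then 0 else QE x k (h - 1)) + 0 * QE x k h + x * QE x k (Suc h)"
    by simp
  show "\<And>n h. QN x y (Suc n) h = (if h = 0 then 0 else QN x y n (h - 1)) + 0 * QN x y n h + x * QN x y n (Suc h) + (y + 1) * QN x y n h"
    by (simp add: algebra_simps)
qed

lemma EC_cat: "EC x n 0 = (if even n then x ^ (n div 2) * catalan (n div 2) else 0)"
proof (cases "even n")
  case True
  then obtain m where m: "n = 2 * m" by blast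
  then show ?thesis unfolding EC_def catalan_def using bal_cat[of m] by simp
next
  case False
  then show ?thesis unfolding EC_def by simp
qed

lemma part2: "(\<Sum>k=0..n. (-1) ^ (n - k) * real (n choose k) * (y + 1) ^ (n - k) * Cpoly (k + 1) x y)
   = (if even n then x ^ (n div 2) * catalan (n div 2) else 0)"
proof -
  have b: "Cpoly (Suc k) x y = (\<Sum>j\<le>k. real (k choose j) * (y + 1) ^ (k - j) * QE x j 0)" for k
    unfolding Cpoly_QN QN_QE ..
  have "(\<Sum>k\<le>n. (-1) ^ (n - k) * real (n choose k) * (y + 1) ^ (n - k) * Cpoly (Suc k) x y) = QE x n 0"
    by (rule binom_inv[where f = "\<lambda>j. QE x j 0", OF b])
  then show ?thesis by (simp add: atLeast0AtMost QE_closed EC_cat)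
qed

theorem corollary3p5:
  fixes n :: nat and x y :: real
  shows "((\<Sum>k=0..n. (-1) ^ (n - k) * real (n choose k) * (y + 1) ^ (n - k) * Bpoly (k + 1) x y)
           = Fe n x) \<and>
         ((\<Sum>k=0..n. (-1) ^ (n - k) * real (n choose k) * (y + 1) ^ (n - k) * Cpoly (k + 1) x y)
           = (if even n then x ^ (n div 2) * catalan (n div 2) else 0))"
  using part1 part2 by blast

end
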